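(* Let $v$ be a word with distinct entries, $P\in\mathrm{MRPD}(v)$, and let pipes $j\neq j'$ both be removable in $P$. Then pipe $j'$ is removable in $\Phi_j(P)$, and $\Phi_{j'}(\Phi_j(P))=\Phi_j(\Phi_{j'}(P))$.
   Context: Let $v=v_1\cdots v_m$ be a word of distinct positive integers with sorted entries $a_1<\dots<a_m$. A pipe dream for $v$ fills the staircase $\{(i,k):i,k\ge1,\ i+k\le m+1\}$ (row $i$ from the top, column $k$ from the left) with crossing tiles and bumping tiles (an upper-left arc joining top and left edges, a lower-right arc joining bottom and right edges), every tile $(i,m+1-i)$ being a bumping tile. Pipe $a_k$ enters at the top of column $k$ and travels down/left to the left boundary. It is reduced if any two pipes cross at most once and the pipe exiting row $i$ is labelled $v_i$. A marked reduced pipe dream of $v$ is a reduced pipe dream with a set of marked bumping tiles, where a bumping tile in row $i$ may be marked only if the two pipes through it cross at a crossing tile in a row strictly above $i$; $\mathrm{MRPD}(v)$ is the set of these. Pipe $j$ (entering at column $C_j$) is removable if: (i) column $C_j$ consists, top to bottom, of crossing tiles all traversed by pipe $j$, followed only by unmarked bumping tiles; (ii) for each crossing tile traversed by pipe $j$, the tile directly above it (if any) is not an unmarked bumping tile; (iii) pipe $j$ traverses no marked bumping tile. For removable $j$, in each column $c<C_j$ pipe $j$ traverses either one crossing tile horizontally or two vertically adjacent unmarked bumping tiles $(r,c),(r+1,c)$ (entering $(r,c)$ from the right via its lower-right arc, leaving $(r+1,c)$ leftward via its upper-left arc). $\Phi_j(P)\in\mathrm{MRPD}(v\setminus j)$ is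 obtained by: deleting column $C_j$; in each column $c<C_j$ deleting that crossing tile, or deleting the lower-right half of $(r,c)$ and the upper-left half of $(r+1,c)$; then shifting all tiles right of $C_j$ one unit left and, in columns $c<C_j$, all tiles and half-tiles below pipe $j$ one unit up (the two remaining halves forming one unmarked bumping tile), keeping other tiles and markings. *)

theory Defs
  imports Main
begin

text \<open>Tiles: position (i,k) = (row from top, column from left), both starting at 1.
  A tile function T gives True for a crossing tile and False for a bumping tile.
  A marked pipe dream is a pair (T, M) with M the set of marked tiles.\<close>

type_synonym tiles = "nat \<Rightarrow> nat \<Rightarrow> bool"
type_synonym mpd = "tiles \<times> (nat \<times> nat) set"

datatype dir = FromTop | FromRight

definition in_stair :: "nat \<Rightarrow> nat \<times> nat \<Rightarrow> bool" where
  "in_stair m p \<longleftrightarrow> 1 \<le> fst p \<and> 1 \<le> snd p \<and> fst p + snd p \<le> m + 1"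

definition pipe_dream :: "nat \<Rightarrow> tiles \<Rightarrow> bool" where
  "pipe_dream m T \<longleftrightarrow> (\<forall>i k. T i k \<longrightarrow> in_stair m (i, k))
     \<and> (\<forall>i. 1 \<le> i \<and> i \<le> m \<longrightarrow> \<not> T i (m + 1 - i))"

text \<open>One step of a pipe: state = (tile entered, side it was entered from).
  Column 0 means the pipe has left through the left boundary.\<close>
fun step :: "tiles \<Rightarrow> (nat \<times> nat) \<times> dir \<Rightarrow> (nat \<times> nat) \<times> dir" where
  "step T ((r, c), d) =
     (if c = 0 then ((r, c), d) else
      (case d of
         FromTop \<Rightarrow> (if T r c then ((r + 1, c), FromTop) else ((r, c - 1), FromRight))
       | FromRight \<Rightarrow> (if T r c then ((r, c - 1), FromRight) else ((r + 1, c), FromTop))))"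

definition pipe_state :: "tiles \<Rightarrow> nat \<Rightarrow> nat \<Rightarrow> (nat \<times> nat) \<times> dir" where
  "pipe_state T k n = (step T ^^ n) ((1, k), FromTop)"

text \<open>Tiles visited (with entry side) by the pipe entering at the top of column k.
  Each step increases the row or decreases the column, so 2m steps suffice.\<close>
definition visits :: "nat \<Rightarrow> tiles \<Rightarrow> nat \<Rightarrow> ((nat \<times> nat) \<times> dir) set" where
  "visits m T k = {s. \<exists>n \<le> 2 * m. s = pipe_state T k n \<and> 1 \<le> snd (fst s)}"

definition traverses :: "nat \<Rightarrow> tiles \<Rightarrow> nat \<Rightarrow> nat \<times> nat \<Rightarrow> bool" where
  "traverses m T k p \<longleftrightarrow> (\<exists>d. (p, d) \<in> visits m T k)"

definition exit_row :: "nat \<Rightarrow> tiles \<Rightarrow> nat \<Rightarrow> nat" where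
  "exit_row m T k = fst (fst (pipe_state T k (2 * m)))"

definition cross_tiles :: "nat \<Rightarrow> tiles \<Rightarrow> nat \<Rightarrow> nat \<Rightarrow> (nat \<times> nat) set" where
  "cross_tiles m T k k' = {p. T (fst p) (snd p) \<and> traverses m T k p \<and> traverses m T k' p}"

text \<open>Label of the pipe entering column k: the k-th smallest entry of v;
  column of the pipe labelled j.\<close>
definition label :: "nat list \<Rightarrow> nat \<Rightarrow> nat" where
  "label v k = sort v ! (k - 1)"

definition col :: "nat list \<Rightarrow> nat \<Rightarrow> nat" where
  "col v j = (THE k. 1 \<le> k \<and> k \<le> length v \<and> label v k = j)"

definition reduced :: "nat list \<Rightarrow> tiles \<Rightarrow> bool" where
  "reduced v T \<longleftrightarrow> pipe_dream (length v) T
     \<and> (\<forall>k k'. k \<in> {1..length v} \<and> k' \<in> {1..length v} \<and> k \<noteq> k'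
           \<longrightarrow> card (cross_tiles (length v) T k k') \<le> 1)
     \<and> (\<forall>k \<in> {1..length v}. 1 \<le> exit_row (length v) T k \<and> exit_row (length v) T k \<le> length v
           \<and> v ! (exit_row (length v) T k - 1) = label v k)"

definition MRPD :: "nat list \<Rightarrow> mpd set" where
  "MRPD v = {(T, M). reduced v T \<and>
     (\<forall>p \<in> M. in_stair (length v) p \<and> \<not> T (fst p) (snd p) \<and>
        (\<exists>k k'. k \<in> {1..length v} \<and> k' \<in> {1..length v} \<and> k \<noteq> k'
           \<and> traverses (length v) T k p \<and> traverses (length v) T k' p
           \<and> (\<exists>q \<in> cross_tiles (length v) T k k'. fst q < fst p)))}"

definition removable :: "nat list \<Rightarrow> mpd \<Rightarrow> nat \<Rightarrow> bool" where
  "removable v P j \<longleftrightarrow> j \<in> set v \<and>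
     (let m = length v; T = fst P; M = snd P; C = col v j in
       (\<exists>t. (\<forall>r. 1 \<le> r \<and> r \<le> t \<longrightarrow> T r C \<and> traverses m T C (r, C))
          \<and> (\<forall>r. t < r \<and> r + C \<le> m + 1 \<longrightarrow> \<not> T r C \<and> (r, C) \<notin> M))
     \<and> (\<forall>p. T (fst p) (snd p) \<and> traverses m T C p \<and> 2 \<le> fst p
          \<longrightarrow> \<not> (\<not> T (fst p - 1) (snd p) \<and> (fst p - 1, snd p) \<notin> M))
     \<and> (\<forall>p \<in> M. \<not> traverses m T C p))"

text \<open>For a column c < C_j, h c is the topmost row of column c
  traversed by pipe j (the crossing tile, or the upper of the two bumping tiles).
  New row i of column c comes from old row i (i < h c) or i+1 (i \<ge> h c); in the
  bumping case the new tile (h c, c) is the merged unmarked bumping tile.\<close>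
definition Phi :: "nat list \<Rightarrow> mpd \<Rightarrow> nat \<Rightarrow> mpd" where
  "Phi v P j =
    (let m = length v; T = fst P; M = snd P; C = col v j;
         h = (\<lambda>c. Min {r. traverses m T C (r, c)});
         src = (\<lambda>c i. if i < h c then i else i + 1);
         merged = (\<lambda>i c. c < C \<and> i = h c \<and> \<not> T (h c) c)
     in ((\<lambda>i c. in_stair (m - 1) (i, c) \<and>
            (if c < C then \<not> merged i c \<and> T (src c i) c else T i (c + 1))),
         {(i, c). in_stair (m - 1) (i, c) \<and>
            (if c < C then \<not> merged i c \<and> (src c i, c) \<in> M else (i, c + 1) \<in> M)}))"

end

theory Submission
  imports Defs
begin

definition sr :: "nat \<Rightarrow> nat \<Rightarrow> nat" where "sr e i = (if i < e then i else i + 1)"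

lemma col_comm_lt:
  fixes g h :: "nat \<Rightarrow> bool"
  assumes "b < a" "g a = A" "\<not> A \<longrightarrow> \<not> g (a+1)" "g b = B" "\<not> B \<longrightarrow> \<not> g (b+1)"
    "\<not> h a" "\<not> A \<longrightarrow> \<not> h (a+1)" "\<not> h b" "\<not> B \<longrightarrow> \<not> h (b+1)"
  shows "(\<not> (i = b \<and> \<not> B) \<and> \<not> (sr b i = a \<and> \<not> A) \<and> g (sr a (sr b i)))
       = (\<not> (i = a - 1 \<and> \<not> A) \<and> \<not> (sr (a - 1) i = b \<and> \<not> B) \<and> g (sr b (sr (a - 1) i)))"
   and "(\<not> (i = b \<and> \<not> B) \<and> \<not> (sr b i = a \<and> \<not> A) \<and> h (sr a (sr b i)))
       = (\<not> (i = a - 1 \<and> \<not> A) \<and> \<not> (sr (a - 1) i = b \<and> \<not> B) \<and> h (sr b (sr (a - 1) i)))"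
proof -
  obtain a' where a: "a = Suc a'" using assms(1) by (cases a) auto
  have "b \<le> a'" using assms(1) a by simp
  then show "(\<not> (i = b \<and> \<not> B) \<and> \<not> (sr b i = a \<and> \<not> A) \<and> g (sr a (sr b i)))
       = (\<not> (i = a - 1 \<and> \<not> A) \<and> \<not> (sr (a - 1) i = b \<and> \<not> B) \<and> g (sr b (sr (a - 1) i)))"
    using assms(2-5) unfolding sr_def a
    apply (cases "i < b"; cases "i = b"; cases "i < a'"; cases "i = a'"; cases "b = a'"; cases A; cases B)
    apply (simp_all)
    done
  show "(\<not> (i = b \<and> \<not> B) \<and> \<not> (sr b i = a \<and> \<not> A) \<and> h (sr a (sr b i)))
       = (\<not> (i = a - 1 \<and> \<not> A) \<and> \<not> (sr (a - 1) i = b \<and> \<not> B) \<and> h (sr b (sr (a - 1) i)))"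
    using assms(2-9) \<open>b \<le> a'\<close> unfolding sr_def a
    apply (cases "i < b"; cases "i = b"; cases "i < a'"; cases "i = a'"; cases "b = a'"; cases A; cases B)
    apply (simp_all)
    done
qed

lemma col_comm_g:
  fixes g h :: "nat \<Rightarrow> bool"
  assumes "a \<noteq> b" "g a = A" "\<not> A \<longrightarrow> \<not> g (a+1)" "g b = B" "\<not> B \<longrightarrow> \<not> g (b+1)"
    "\<not> h a" "\<not> A \<longrightarrow> \<not> h (a+1)" "\<not> h b" "\<not> B \<longrightarrow> \<not> h (b+1)"
  shows "(\<not> (i = (if b < a then b else b - 1) \<and> \<not> B) \<and> \<not> (sr (if b < a then b else b - 1) i = a \<and> \<not> A) \<and> g (sr a (sr (if b < a then b else b - 1) i)))
       = (\<not> (i = (if a < b then a else a - 1) \<and> \<not> A) \<and> \<not> (sr (if a < b then a else a - 1) i = b \<and> \<not> B) \<and> g (sr b (sr (if a < b then a else a - 1) i)))"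
proof -
  consider "b < a" | "a < b" using assms(1) by linarith
  then show ?thesis
  proof cases
    case 1
    then show ?thesis using col_comm_lt(1)[OF 1 assms(2-9)] by simp
  next
    case 2
    then show ?thesis using col_comm_lt(1)[OF 2 assms(4,5,2,3,8,9,6,7)] by auto
  qed
qed

lemma col_comm_h:
  fixes g h :: "nat \<Rightarrow> bool"
  assumes "a \<noteq> b" "g a = A" "\<not> A \<longrightarrow> \<not> g (a+1)" "g b = B" "\<not> B \<longrightarrow> \<not> g (b+1)"
    "\<not> h a" "\<not> A \<longrightarrow> \<not> h (a+1)" "\<not> h b" "\<not> B \<longrightarrow> \<not> h (b+1)"
  shows "(\<not> (i = (if b < a then b else b - 1) \<and> \<not> B) \<and> \<not> (sr (if b < a then b else b - 1) i = a \<and> \<not> A) \<and> h (sr a (sr (if b < a then b else b - 1) i)))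
       = (\<not> (i = (if a < b then a else a - 1) \<and> \<not> A) \<and> \<not> (sr (if a < b then a else a - 1) i = b \<and> \<not> B) \<and> h (sr b (sr (if a < b then a else a - 1) i)))"
proof -
  consider "b < a" | "a < b" using assms(1) by linarith
  then show ?thesis
  proof cases
    case 1
    then show ?thesis using col_comm_lt(2)[OF 1 assms(2-9)] by simp
  next
    case 2
    then show ?thesis using col_comm_lt(2)[OF 2 assms(4,5,2,3,8,9,6,7)] by auto
  qed
qed


lemma ps0[simp]: "pipe_state T k 0 = ((1,k),FromTop)"
  by (simp add: pipe_state_def)
lemma psSuc: "pipe_state T k (Suc n) = step T (pipe_state T k n)"
  by (simp add: pipe_state_def)

declare step.simps[simp del]
lemma step_0[simp]: "step T ((r,0),d) = ((r,0),d)" by (simp add: step.simps)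
lemma step_top: "c \<ge> 1 \<Longrightarrow> step T ((r,c),FromTop) = (if T r c then ((r+1,c),FromTop) else ((r,c-1),FromRight))"
  by (simp add: step.simps)
lemma step_right: "c \<ge> 1 \<Longrightarrow> step T ((r,c),FromRight) = (if T r c then ((r,c-1),FromRight) else ((r+1,c),FromTop))"
  by (simp add: step.simps)

function erow :: "tiles \<Rightarrow> nat \<Rightarrow> nat \<Rightarrow> nat \<Rightarrow> nat" where
  "erow T C t c = (if C \<le> c + 1 then t + 1 else
     (let r = erow T C t (c+1) in if T r (c+1) then r else r + 1))"
  by auto
termination by (relation "measure (\<lambda>(T,C,t,c). C - c)") auto
declare erow.simps[simp del]

lemma erow_top: "C \<le> c + 1 \<Longrightarrow> erow T C t c = t + 1"
  by (simp add: erow.simps)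
lemma erow_step: "c + 1 < C \<Longrightarrow> erow T C t c =
   (if T (erow T C t (c+1)) (c+1) then erow T C t (c+1) else erow T C t (c+1) + 1)"
  by (subst erow.simps) (simp add: Let_def)

lemma erow_bound: "c < C \<Longrightarrow> erow T C t c + c \<le> t + C"
proof (induction "C - c" arbitrary: c)
  case 0 then show ?case by simp
next
  case (Suc x)
  show ?case
  proof (cases "C \<le> c + 1")
    case True then show ?thesis using Suc by (simp add: erow_top)
  next
    case False
    then have "erow T C t (c+1) + (c+1) \<le> t + C" using Suc.hyps(1)[of "c+1"] Suc.hyps(2) by simp
    moreover have "erow T C t c \<le> erow T C t (c+1) + 1" using False by (simp add: erow_step)
    ultimately show ?thesis by linarith
  qed
qed

lemma erow_ge1: "erow T C t c \<ge> 1"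
proof (induction "C - c" arbitrary: c)
  case 0 then show ?case by (simp add: erow_top)
next
  case (Suc x)
  then show ?case by (cases "C \<le> c + 1") (simp_all add: erow_top erow_step)
qed

definition vshape :: "tiles \<Rightarrow> nat \<Rightarrow> nat \<Rightarrow> bool" where
  "vshape T C t \<longleftrightarrow> (\<forall>r. 1 \<le> r \<and> r \<le> t \<longrightarrow> T r C) \<and> \<not> T (t+1) C"
definition bcond :: "tiles \<Rightarrow> nat \<Rightarrow> nat \<Rightarrow> nat \<Rightarrow> bool" where
  "bcond T C t c \<longleftrightarrow> (\<not> T (erow T C t c) c \<longrightarrow> \<not> T (erow T C t c + 1) c)"
definition hshape :: "tiles \<Rightarrow> nat \<Rightarrow> nat \<Rightarrow> bool" where
  "hshape T C t \<longleftrightarrow> (\<forall>c. 1 \<le> c \<and> c < C \<longrightarrow> bcond T C t c)"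

lemma ps_vert: "vshape T C t \<Longrightarrow> C \<ge> 1 \<Longrightarrow> n \<le> t \<Longrightarrow> pipe_state T C n = ((n+1,C),FromTop)"
  by (induction n) (auto simp: psSuc step_top vshape_def)

lemma ps_col: assumes "vshape T C t" "C \<ge> 1" "\<forall>c'. c < c' \<and> c' < C \<longrightarrow> bcond T C t c'" "c < C"
  shows "pipe_state T C (erow T C t c + C - c - 1) = ((erow T C t c, c), FromRight)"
  using assms(3,4)
proof (induction "C - c" arbitrary: c)
  case 0 then show ?case by simp
next
  case (Suc x)
  show ?case
  proof (cases "C \<le> c + 1")
    case True
    then have cc: "c = C - 1" using Suc by simp
    have "pipe_state T C (t+1) = step T ((t+1,C),FromTop)"
      using ps_vert[OF assms(1,2), of t] by (simp add: psSuc)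
    also have "\<dots> = ((t+1, C-1), FromRight)" using assms(1,2) by (simp add: step_top vshape_def)
    finally show ?thesis using True cc assms(2) by (simp add: erow_top)
  next
    case False
    let ?r = "erow T C t (c+1)"
    have IH: "pipe_state T C (?r + C - (c+1) - 1) = ((?r, c+1), FromRight)"
      using Suc False by auto
    have b: "bcond T C t (c+1)" using Suc False by auto
    have r1: "?r \<ge> 1" by (rule erow_ge1)
    show ?thesis
    proof (cases "T ?r (c+1)")
      case True
      have "pipe_state T C (?r + C - (c+1) - 1 + 1) = ((?r, c), FromRight)"
        using IH True by (simp add: psSuc step_right)
      moreover have "?r + C - (c+1) - 1 + 1 = erow T C t c + C - c - 1"
        using True False r1 by (simp add: erow_step)
      ultimately show ?thesis using True False by (simp add: erow_step)
    next
      case f: False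
      have "pipe_state T C (?r + C - (c+1) - 1 + 1 + 1) = ((?r+1, c), FromRight)"
        using IH f b by (simp add: psSuc step_right step_top bcond_def)
      moreover have "?r + C - (c+1) - 1 + 1 + 1 = erow T C t c + C - c - 1"
        using f False r1 by (simp add: erow_step)
      ultimately show ?thesis using f False by (simp add: erow_step)
    qed
  qed
qed

lemma ps_bump: assumes "vshape T C t" "C \<ge> 1" "\<forall>c'. c < c' \<and> c' < C \<longrightarrow> bcond T C t c'" "c < C"
   "c \<ge> 1" "\<not> T (erow T C t c) c"
  shows "pipe_state T C (erow T C t c + C - c) = ((erow T C t c + 1, c), FromTop)"
proof -
  have "erow T C t c + C - c = Suc (erow T C t c + C - c - 1)" using assms(4) erow_ge1[of T C t c] by simp
  then show ?thesis using ps_col[OF assms(1-4)] assms(5,6) by (simp add: psSuc step_right)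
qed


definition Sfull :: "tiles \<Rightarrow> nat \<Rightarrow> nat \<Rightarrow> ((nat \<times> nat) \<times> dir) set" where
  "Sfull T C t = {s. (\<exists>r. s = ((r,C),FromTop) \<and> 1 \<le> r \<and> r \<le> t+1)
     \<or> (\<exists>c. c < C \<and> s = ((erow T C t c, c), FromRight))
     \<or> (\<exists>c. 1 \<le> c \<and> c < C \<and> \<not> T (erow T C t c) c \<and> s = ((erow T C t c + 1, c), FromTop))}"

lemma Sfull_closed: assumes "vshape T C t" "hshape T C t" "C \<ge> 1" "s \<in> Sfull T C t"
  shows "step T s \<in> Sfull T C t"
proof -
  from assms(4) consider (v) r where "s = ((r,C),FromTop)" "1 \<le> r" "r \<le> t+1"
    | (h) c where "c < C" "s = ((erow T C t c, c), FromRight)"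
    | (b) c where "1 \<le> c" "c < C" "\<not> T (erow T C t c) c" "s = ((erow T C t c + 1, c), FromTop)"
    unfolding Sfull_def by blast
  then show ?thesis
  proof cases
    case v
    show ?thesis
    proof (cases "r \<le> t")
      case True
      then have "T r C" using assms(1) v by (simp add: vshape_def)
      then show ?thesis using v True assms(3) by (simp add: step_top Sfull_def)
    next
      case False
      then have "r = t + 1" using v by simp
      moreover have "\<not> T (t+1) C" using assms(1) by (simp add: vshape_def)
      ultimately have "step T s = ((erow T C t (C-1), C-1), FromRight)"
        using v assms(3) by (simp add: step_top erow_top)
      then show ?thesis using assms(3) unfolding Sfull_def by auto
    qed
  next
    case h
    show ?thesis
    proof (cases "c = 0")
      case True then show ?thesis using h assms(4) by simp
    next
      case False
      have e: "erow T C t (c-1) = (if T (erow T C t c) c then erow T C t c else erow T C t c + 1)"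
        using erow_step[of "c-1" C T t] h False by simp
      show ?thesis
      proof (cases "T (erow T C t c) c")
        case True
        then have "step T s = ((erow T C t (c-1), c-1), FromRight)" using h False e by (simp add: step_right)
        then show ?thesis using h unfolding Sfull_def by auto
      next
        case f: False
        then have "step T s = ((erow T C t c + 1, c), FromTop)" using h False by (simp add: step_right)
        then show ?thesis using h f False unfolding Sfull_def by auto
      qed
    qed
  next
    case b
    have e: "erow T C t (c-1) = erow T C t c + 1"
      using erow_step[of "c-1" C T t] b by simp
    have "\<not> T (erow T C t c + 1) c" using assms(2) b by (simp add: hshape_def bcond_def)
    then have "step T s = ((erow T C t (c-1), c-1), FromRight)" using b e by (simp add: step_top)
    then show ?thesis using b unfolding Sfull_def by auto
  qed
qed

lemma ps_Sfull: assumes "vshape T C t" "hshape T C t" "C \<ge> 1"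
  shows "pipe_state T C n \<in> Sfull T C t"
proof (induction n)
  case 0 then show ?case using assms(3) by (simp add: Sfull_def)
next
  case (Suc n) then show ?case using Sfull_closed[OF assms] by (simp add: psSuc)
qed

lemma visits_char: assumes "vshape T C t" "hshape T C t" "C \<ge> 1" "t + C \<le> m"
  shows "(s \<in> visits m T C) \<longleftrightarrow> (s \<in> Sfull T C t \<and> 1 \<le> snd (fst s))"
proof
  assume "s \<in> visits m T C"
  then show "s \<in> Sfull T C t \<and> 1 \<le> snd (fst s)" using ps_Sfull[OF assms(1-3)] by (auto simp: visits_def)
next
  assume a: "s \<in> Sfull T C t \<and> 1 \<le> snd (fst s)"
  have hs: "\<forall>c'. c < c' \<and> c' < C \<longrightarrow> bcond T C t c'" for c using assms(2) by (simp add: hshape_def)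
  from a consider (v) r where "s = ((r,C),FromTop)" "1 \<le> r" "r \<le> t+1"
    | (h) c where "c < C" "1 \<le> c" "s = ((erow T C t c, c), FromRight)"
    | (b) c where "1 \<le> c" "c < C" "\<not> T (erow T C t c) c" "s = ((erow T C t c + 1, c), FromTop)"
    unfolding Sfull_def by auto
  then show "s \<in> visits m T C"
  proof cases
    case v
    have "pipe_state T C (r-1) = s" using ps_vert[OF assms(1,3), of "r-1"] v by simp
    moreover have "r - 1 \<le> 2 * m" using v assms(4) by linarith
    ultimately show ?thesis using v assms(3) unfolding visits_def by force
  next
    case h
    have "pipe_state T C (erow T C t c + C - c - 1) = s" using ps_col[OF assms(1,3) hs h(1)] h by simp
    moreover have "erow T C t c + C - c - 1 \<le> 2 * m" using erow_bound[OF h(1), of T t] assms(4) by linarith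
    ultimately show ?thesis using h unfolding visits_def by force
  next
    case b
    have "pipe_state T C (erow T C t c + C - c) = s" using ps_bump[OF assms(1,3) hs b(2,1,3)] b by simp
    moreover have "erow T C t c + C - c \<le> 2 * m" using erow_bound[OF b(2), of T t] assms(4) by linarith
    ultimately show ?thesis using b unfolding visits_def by force
  qed
qed

lemma trav_char: assumes "vshape T C t" "hshape T C t" "C \<ge> 1" "t + C \<le> m"
  shows "traverses m T C (r,c) \<longleftrightarrow> (c = C \<and> 1 \<le> r \<and> r \<le> t+1)
     \<or> (1 \<le> c \<and> c < C \<and> (r = erow T C t c \<or> (r = erow T C t c + 1 \<and> \<not> T (erow T C t c) c)))"
  unfolding traverses_def visits_char[OF assms] Sfull_def using assms(3) by auto

lemma visR_char: assumes "vshape T C t" "hshape T C t" "C \<ge> 1" "t + C \<le> m"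
  shows "((r,c),FromRight) \<in> visits m T C \<longleftrightarrow> (1 \<le> c \<and> c < C \<and> r = erow T C t c)"
  unfolding visits_char[OF assms] Sfull_def by auto

lemma ps_col0: "snd (fst (pipe_state T k n)) = 0 \<Longrightarrow> snd (fst (pipe_state T k (n + d))) = 0"
  apply (induction d) apply simp
  apply (simp add: psSuc) apply (metis prod.collapse step_0)
  done

lemma sub1_eq: "1 \<le> (a::nat) \<Longrightarrow> 1 \<le> b \<Longrightarrow> (a - Suc 0 = b - Suc 0) = (a = b)" by arith

lemma step_inj: assumes "step T s1 = step T s2" "1 \<le> snd (fst s1)" "1 \<le> snd (fst s2)"
  shows "s1 = s2"
proof -
  obtain r1 c1 d1 r2 c2 d2 where s: "s1 = ((r1,c1),d1)" "s2 = ((r2,c2),d2)" by (metis prod.collapse)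
  show ?thesis using assms unfolding s
    by (cases d1; cases d2; auto simp: step_top step_right sub1_eq split: if_splits)
qed

lemma ps_row1: "fst (fst (pipe_state T k n)) \<ge> 1"
proof (induction n)
  case 0 then show ?case by simp
next
  case (Suc n)
  obtain r1 c1 d1 where s: "pipe_state T k n = ((r1,c1),d1)" by (metis prod.collapse)
  show ?case using Suc s by (cases "c1 = 0"; cases d1) (auto simp: psSuc step_top step_right)
qed

lemma ps_top_row: "pipe_state T k (Suc n) = ((r,c),FromTop) \<Longrightarrow> 1 \<le> c \<Longrightarrow> r \<ge> 2"
proof -
  assume a: "pipe_state T k (Suc n) = ((r,c),FromTop)" "1 \<le> c"
  obtain r1 c1 d1 where s: "pipe_state T k n = ((r1,c1),d1)" by (metis prod.collapse)
  have "c1 \<ge> 1" using a s by (cases "c1 = 0") (auto simp: psSuc)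
  moreover have "r1 \<ge> 1" using ps_row1[of T k n] s by simp
  ultimately show ?thesis using a s by (cases d1) (auto simp: psSuc step_top step_right split: if_splits)
qed

lemma ps_disj: "pipe_state T k n = pipe_state T k' n' \<Longrightarrow> 1 \<le> snd (fst (pipe_state T k n)) \<Longrightarrow> k = k'"
proof (induction n arbitrary: n')
  case 0
  show ?case
  proof (cases n')
    case 0 then show ?thesis using "0.prems" by simp
  next
    case (Suc n'')
    have "pipe_state T k' (Suc n'') = ((1, k), FromTop)" using "0.prems" Suc by simp
    moreover have "1 \<le> k" using "0.prems" by (metis fst_conv ps0 snd_conv)
    ultimately show ?thesis using ps_top_row[of T k' n'' 1 k] by simp
  qed
next
  case (Suc n)
  show ?case
  proof (cases n')
    case 0 then show ?thesis using Suc.prems ps_top_row[of T k n 1 k'] by simp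
  next
    case (Suc n'')
    have c1: "1 \<le> snd (fst (pipe_state T k n))"
      using Suc.prems ps_col0[of T k n 1] by (cases "snd (fst (pipe_state T k n)) = 0") auto
    have c2: "1 \<le> snd (fst (pipe_state T k' n''))"
      using Suc.prems ps_col0[of T k' n'' 1] Suc by (cases "snd (fst (pipe_state T k' n'')) = 0") auto
    have "pipe_state T k n = pipe_state T k' n''"
      using step_inj[OF _ c1 c2] Suc.prems Suc by (simp add: psSuc)
    then show ?thesis using Suc.IH c1 by blast
  qed
qed

lemma visits_disj: "s \<in> visits m T k \<Longrightarrow> s \<in> visits m T k' \<Longrightarrow> k = k'"
  unfolding visits_def using ps_disj by fastforce


definition rp :: "nat \<Rightarrow> tiles \<Rightarrow> (nat \<times> nat) set \<Rightarrow> nat \<Rightarrow> nat \<Rightarrow> bool" where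
  "rp m T M C t \<longleftrightarrow> pipe_dream m T \<and> 1 \<le> C \<and> t + C \<le> m \<and> vshape T C t \<and> hshape T C t
    \<and> (\<forall>r. T r C \<longleftrightarrow> 1 \<le> r \<and> r \<le> t)
    \<and> (\<forall>p. traverses m T C p \<longrightarrow> p \<notin> M)
    \<and> (\<forall>p. T (fst p) (snd p) \<and> traverses m T C p \<and> 2 \<le> fst p \<longrightarrow> T (fst p - 1) (snd p) \<or> (fst p - 1, snd p) \<in> M)
    \<and> (\<forall>p\<in>M. in_stair m p) \<and> (\<forall>r. (r, C) \<notin> M)"

lemma rp_removable: assumes "rp m T M C t" "length v = m" "j \<in> set v" "col v j = C"
  shows "removable v (T,M) j"
proof -
  have r: "pipe_dream m T" "1 \<le> C" "t + C \<le> m" "vshape T C t" "hshape T C t"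
    "\<forall>r. T r C \<longleftrightarrow> 1 \<le> r \<and> r \<le> t" "\<forall>p. traverses m T C p \<longrightarrow> p \<notin> M"
    "\<forall>p. T (fst p) (snd p) \<and> traverses m T C p \<and> 2 \<le> fst p \<longrightarrow> T (fst p - 1) (snd p) \<or> (fst p - 1, snd p) \<in> M"
    "\<forall>r. (r, C) \<notin> M"
    using assms(1) unfolding rp_def by auto
  have tr: "traverses m T C (r, C)" if "1 \<le> r" "r \<le> t" for r
    using trav_char[OF r(4,5,2,3)] that by simp
  show ?thesis unfolding removable_def Let_def using assms r tr
    by (auto intro!: exI[of _ t])
qed

lemma hshape_from: assumes "vshape T C t" "1 \<le> C" "t + C \<le> m"
  "\<forall>p. traverses m T C p \<longrightarrow> p \<notin> M"
  "\<forall>p. T (fst p) (snd p) \<and> traverses m T C p \<and> 2 \<le> fst p \<longrightarrow> \<not> (\<not> T (fst p - 1) (snd p) \<and> (fst p - 1, snd p) \<notin> M)"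
  shows "hshape T C t"
proof -
  have "\<forall>c'. c \<le> c' \<and> c' < C \<longrightarrow> bcond T C t c'" if "1 \<le> c" for c
    using that
  proof (induction "C - c" arbitrary: c)
    case 0 then show ?case by auto
  next
    case (Suc x)
    have hs: "\<forall>c'. c < c' \<and> c' < C \<longrightarrow> bcond T C t c'"
      using Suc.hyps(1)[of "c+1"] Suc.hyps(2) Suc.prems by auto
    have "bcond T C t c" if cC: "c < C"
    proof (rule ccontr)
      let ?e = "erow T C t c"
      assume "\<not> bcond T C t c"
      then have n1: "\<not> T ?e c" and n2: "T (?e + 1) c" by (auto simp: bcond_def)
      have p1: "pipe_state T C (?e + C - c - 1) = ((?e, c), FromRight)" using ps_col[OF assms(1,2) hs cC] .
      have p2: "pipe_state T C (?e + C - c) = ((?e + 1, c), FromTop)" using ps_bump[OF assms(1,2) hs cC Suc.prems n1] .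
      have b: "?e + C - c \<le> 2 * m" using erow_bound[OF cC, of T t] assms(3) by linarith
      have t1: "traverses m T C (?e, c)" unfolding traverses_def visits_def
        using p1 b Suc.prems by (intro exI[of _ FromRight] CollectI exI[of _ "?e + C - c - 1"]) auto
      have t2: "traverses m T C (?e + 1, c)" unfolding traverses_def visits_def
        using p2 b Suc.prems by (intro exI[of _ FromTop] CollectI exI[of _ "?e + C - c"]) auto
      have "(?e, c) \<notin> M" using assms(4) t1 by blast
      moreover have "2 \<le> ?e + 1" using erow_ge1[of T C t c] by simp
      ultimately show False using assms(5)[rule_format, of "(?e+1, c)"] t2 n1 n2 by auto
    qed
    then show ?case using hs by (metis le_neq_implies_less)
  qed
  then show ?thesis unfolding hshape_def by auto
qed

lemma MRPD_pd: "(T, M) \<in> MRPD v \<Longrightarrow> pipe_dream (length v) T"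
  unfolding MRPD_def reduced_def by auto
lemma MRPD_M: "(T, M) \<in> MRPD v \<Longrightarrow> p \<in> M \<Longrightarrow> in_stair (length v) p"
  unfolding MRPD_def by auto

lemma removable_rp: assumes "(T, M) \<in> MRPD v" "removable v (T,M) j" "col v j = C" "1 \<le> C" "C \<le> length v"
  shows "\<exists>t. rp (length v) T M C t"
proof -
  let ?m = "length v"
  have pd: "pipe_dream ?m T" using MRPD_pd[OF assms(1)] .
  have Ms: "\<forall>p\<in>M. in_stair ?m p" using MRPD_M[OF assms(1)] by blast
  have R: "\<exists>t. (\<forall>r. 1 \<le> r \<and> r \<le> t \<longrightarrow> T r C \<and> traverses ?m T C (r, C))
          \<and> (\<forall>r. t < r \<and> r + C \<le> ?m + 1 \<longrightarrow> \<not> T r C \<and> (r, C) \<notin> M)"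
    "\<forall>p. T (fst p) (snd p) \<and> traverses ?m T C p \<and> 2 \<le> fst p
          \<longrightarrow> \<not> (\<not> T (fst p - 1) (snd p) \<and> (fst p - 1, snd p) \<notin> M)"
    "\<forall>p \<in> M. \<not> traverses ?m T C p"
    using assms(2,3) unfolding removable_def Let_def by auto
  obtain t where A: "\<forall>r. 1 \<le> r \<and> r \<le> t \<longrightarrow> T r C \<and> traverses ?m T C (r, C)"
    and B: "\<forall>r. t < r \<and> r + C \<le> ?m + 1 \<longrightarrow> \<not> T r C \<and> (r, C) \<notin> M" using R(1) by blast
  have out: "\<not> T r c" if "\<not> in_stair ?m (r,c)" for r c using pd that unfolding pipe_dream_def by blast
  have tC: "t + C \<le> ?m"
  proof (cases "t = 0")
    case True then show ?thesis using assms(5) by simp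
  next
    case False
    then have "T t C" using A by simp
    have i1: "in_stair ?m (t, C)" using out \<open>T t C\<close> by blast
    have "t + C \<noteq> ?m + 1"
    proof
      assume e: "t + C = ?m + 1"
      then have "C = ?m + 1 - t" "1 \<le> t" "t \<le> ?m" using False assms(4) by auto
      then show False using pd \<open>T t C\<close> unfolding pipe_dream_def by blast
    qed
    then show ?thesis using i1 unfolding in_stair_def by simp
  qed
  have colC: "\<forall>r. T r C \<longleftrightarrow> 1 \<le> r \<and> r \<le> t"
  proof (intro allI iffI)
    fix r assume "T r C"
    then have "in_stair ?m (r, C)" using out by blast
    then show "1 \<le> r \<and> r \<le> t" using B \<open>T r C\<close> unfolding in_stair_def by (metis fst_conv not_le snd_conv)
  qed (use A in auto)
  have vs: "vshape T C t" unfolding vshape_def using colC by simp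
  have unm: "\<forall>p. traverses ?m T C p \<longrightarrow> p \<notin> M" using R(3) by blast
  have McolC: "\<forall>r. (r, C) \<notin> M"
  proof
    fix r show "(r, C) \<notin> M"
    proof (cases "1 \<le> r \<and> r \<le> t")
      case True then show ?thesis using A unm by blast
    next
      case False
      then show ?thesis using B Ms unfolding in_stair_def by (metis fst_conv not_le snd_conv)
    qed
  qed
  have hs: "hshape T C t" using hshape_from[OF vs assms(4) tC unm R(2)] .
  show ?thesis unfolding rp_def using pd assms(4) tC vs hs colC unm R(2) Ms McolC by (intro exI[of _ t]) auto
qed


definition PhiT :: "nat \<Rightarrow> nat \<Rightarrow> (nat \<Rightarrow> nat) \<Rightarrow> tiles \<Rightarrow> tiles" where
  "PhiT m C E T = (\<lambda>i c. in_stair (m - 1) (i, c) \<and>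
     (if c < C then \<not> (c < C \<and> i = E c \<and> \<not> T (E c) c) \<and> T (sr (E c) i) c else T i (c + 1)))"
definition PhiM :: "nat \<Rightarrow> nat \<Rightarrow> (nat \<Rightarrow> nat) \<Rightarrow> tiles \<Rightarrow> (nat \<times> nat) set \<Rightarrow> (nat \<times> nat) set" where
  "PhiM m C E T M = {(i, c). in_stair (m - 1) (i, c) \<and>
     (if c < C then \<not> (c < C \<and> i = E c \<and> \<not> T (E c) c) \<and> (sr (E c) i, c) \<in> M else (i, c + 1) \<in> M)}"

lemma Phi_as: "Phi v (T, M) j = (PhiT (length v) (col v j) (\<lambda>c. Min {r. traverses (length v) T (col v j) (r, c)}) T,
   PhiM (length v) (col v j) (\<lambda>c. Min {r. traverses (length v) T (col v j) (r, c)}) T M)"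
  by (simp add: Phi_def PhiT_def PhiM_def Let_def sr_def)

lemma PhiT_cong: assumes "\<And>c. 1 \<le> c \<Longrightarrow> c < C \<Longrightarrow> E c = E' c"
  shows "PhiT m C E T = PhiT m C E' T"
proof (intro ext)
  fix i c
  show "PhiT m C E T i c = PhiT m C E' T i c"
  proof (cases "1 \<le> c \<and> c < C")
    case True then show ?thesis using assms[of c] unfolding PhiT_def by simp
  next
    case False then show ?thesis unfolding PhiT_def in_stair_def by auto
  qed
qed

lemma PhiM_cong: assumes "\<And>c. 1 \<le> c \<Longrightarrow> c < C \<Longrightarrow> E c = E' c"
  shows "PhiM m C E T M = PhiM m C E' T M"
proof (intro set_eqI)
  fix x :: "nat \<times> nat"
  obtain i c where x: "x = (i, c)" by (cases x)
  show "x \<in> PhiM m C E T M \<longleftrightarrow> x \<in> PhiM m C E' T M"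
  proof (cases "1 \<le> c \<and> c < C")
    case True then show ?thesis using assms[of c] unfolding PhiM_def x by simp
  next
    case False then show ?thesis unfolding PhiM_def in_stair_def x by auto
  qed
qed

lemma Phi_eq: assumes "rp m T M C t" "length v = m" "col v j = C"
  shows "Phi v (T, M) j = (PhiT m C (erow T C t) T, PhiM m C (erow T C t) T M)"
proof -
  have r: "vshape T C t" "hshape T C t" "1 \<le> C" "t + C \<le> m" using assms(1) unfolding rp_def by auto
  have h: "Min {r. traverses m T C (r, c)} = erow T C t c" if "1 \<le> c" "c < C" for c
  proof -
    have "{r. traverses m T C (r, c)} = {erow T C t c} \<union> (if T (erow T C t c) c then {} else {erow T C t c + 1})"
      using trav_char[OF r] that by auto
    then show ?thesis by auto
  qed
  show ?thesis unfolding Phi_as assms(2,3) using PhiT_cong[OF h] PhiM_cong[OF h] by simp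
qed


lemma sorted_card_less: assumes "sorted L" "distinct L" "i < length L"
  shows "card {y \<in> set L. y < L ! i} = i"
proof -
  have "{y \<in> set L. y < L ! i} = set (take i L)"
  proof (intro set_eqI iffI)
    fix y assume "y \<in> {y \<in> set L. y < L ! i}"
    then obtain k where k: "k < length L" "L ! k = y" "y < L ! i" by (auto simp: in_set_conv_nth)
    have "k < i"
    proof (rule ccontr)
      assume "\<not> k < i" then have "L ! i \<le> L ! k" using assms(1) k(1) by (simp add: sorted_nth_mono)
      then show False using k by simp
    qed
    then show "y \<in> set (take i L)" using k by (auto simp: in_set_conv_nth)
  next
    fix y assume "y \<in> set (take i L)"
    then obtain k where k: "k < i" "L ! k = y" using assms(3) by (auto simp: in_set_conv_nth)
    have "L ! k \<le> L ! i" using assms(1,3) k(1) by (simp add: sorted_nth_mono)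
    moreover have "L ! k \<noteq> L ! i" using assms(2,3) k(1) by (simp add: nth_eq_iff_index_eq)
    ultimately show "y \<in> {y \<in> set L. y < L ! i}" using k assms(3) by auto
  qed
  then show ?thesis using assms by (simp add: distinct_card)
qed

lemma col_card: assumes "distinct v" "x \<in> set v"
  shows "col v x = card {y \<in> set v. y < x} + 1"
proof -
  let ?L = "sort v"
  obtain i where i: "i < length ?L" "?L ! i = x" using assms(2) by (metis in_set_conv_nth set_sort)
  have d: "distinct ?L" using assms(1) by simp
  have ci: "card {y \<in> set v. y < x} = i" using sorted_card_less[of ?L i] i d by simp
  have "col v x = i + 1" unfolding col_def
  proof (rule the_equality)
    show "1 \<le> i + 1 \<and> i + 1 \<le> length v \<and> label v (i + 1) = x" using i by (simp add: label_def)
  next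
    fix k assume "1 \<le> k \<and> k \<le> length v \<and> label v k = x"
    then have "?L ! (k - 1) = ?L ! i" "k - 1 < length ?L" using i by (auto simp: label_def)
    then have "k - 1 = i" using d i nth_eq_iff_index_eq by metis
    then show "k = i + 1" using \<open>1 \<le> k \<and> _\<close> by linarith
  qed
  then show ?thesis using ci by simp
qed

lemma col_range: assumes "distinct v" "x \<in> set v" shows "1 \<le> col v x" "col v x \<le> length v"
proof -
  have "card {y \<in> set v. y < x} < card (set v)"
    using assms(2) by (intro psubset_card_mono) auto
  then show "1 \<le> col v x" "col v x \<le> length v" using col_card[OF assms] assms(1) by (auto simp: distinct_card)
qed

lemma col_less: assumes "distinct v" "x \<in> set v" "y \<in> set v" "x < y" shows "col v x < col v y"
proof -
  have "{z \<in> set v. z < x} \<subset> {z \<in> set v. z < y}" using assms by auto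
  then have "card {z \<in> set v. z < x} < card {z \<in> set v. z < y}" by (intro psubset_card_mono) auto
  then show ?thesis using col_card assms by simp
qed

lemma col_remove: assumes "distinct v" "j \<in> set v" "j' \<in> set v" "j \<noteq> j'"
  shows "col (removeAll j v) j' = (if col v j' < col v j then col v j' else col v j' - 1)"
proof -
  have d: "distinct (removeAll j v)" using assms(1) by (simp add: distinct_removeAll)
  have c: "col (removeAll j v) j' = card ({y \<in> set v. y < j'} - {j}) + 1"
  proof -
    have "{y \<in> set (removeAll j v). y < j'} = {y \<in> set v. y < j'} - {j}" by auto
    then show ?thesis using col_card[OF d, of j'] assms by simp
  qed
  show ?thesis
  proof (cases "j < j'")
    case True
    then have "card ({y \<in> set v. y < j'} - {j}) = card {y \<in> set v. y < j'} - 1" using assms(2) by simp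
    moreover have "card {y \<in> set v. y < j'} \<ge> 1"
    proof -
      have "j \<in> {y \<in> set v. y < j'}" using True assms(2) by simp
      then have "{y \<in> set v. y < j'} \<noteq> {}" by blast
      then show ?thesis by (simp add: Suc_leI card_gt_0_iff)
    qed
    moreover have "\<not> col v j' < col v j" using col_less[OF assms(1,2,3) True] by simp
    ultimately show ?thesis using c col_card[OF assms(1,3)] by simp
  next
    case False
    then have "j' < j" using assms(4) by simp
    then show ?thesis using c col_card[OF assms(1,3)] col_less[OF assms(1,3,2)] by simp
  qed
qed

lemma col_inj: assumes "distinct v" "j \<in> set v" "j' \<in> set v" "j \<noteq> j'" shows "col v j \<noteq> col v j'"
  using col_less[OF assms(1)] assms by (metis less_irrefl linorder_neqE_nat)


locale two =
  fixes m :: nat and T :: tiles and M :: "(nat \<times> nat) set" and C t K s :: nat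
  assumes rj: "rp m T M C t" and rk: "rp m T M K s" and CK: "C \<noteq> K"
begin

abbreviation "E \<equiv> erow T C t"
abbreviation "F \<equiv> erow T K s"

lemma pd: "pipe_dream m T" using rj unfolding rp_def by simp
lemma C1: "1 \<le> C" using rj unfolding rp_def by simp
lemma K1: "1 \<le> K" using rk unfolding rp_def by simp
lemma tC: "t + C \<le> m" using rj unfolding rp_def by simp
lemma sK: "s + K \<le> m" using rk unfolding rp_def by simp
lemma vsC: "vshape T C t" using rj unfolding rp_def by simp
lemma vsK: "vshape T K s" using rk unfolding rp_def by simp
lemma hsC: "hshape T C t" using rj unfolding rp_def by simp
lemma hsK: "hshape T K s" using rk unfolding rp_def by simp
lemma colC: "T r C \<longleftrightarrow> 1 \<le> r \<and> r \<le> t" using rj unfolding rp_def by simp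
lemma colK: "T r K \<longleftrightarrow> 1 \<le> r \<and> r \<le> s" using rk unfolding rp_def by simp
lemma unmC: "traverses m T C p \<Longrightarrow> p \<notin> M" using rj unfolding rp_def by (cases p) auto
lemma unmK: "traverses m T K p \<Longrightarrow> p \<notin> M" using rk unfolding rp_def by (cases p) auto
lemma iiC: "T a b \<Longrightarrow> traverses m T C (a, b) \<Longrightarrow> 2 \<le> a \<Longrightarrow> T (a - 1) b \<or> (a - 1, b) \<in> M"
  using rj unfolding rp_def by fastforce
lemma iiK: "T a b \<Longrightarrow> traverses m T K (a, b) \<Longrightarrow> 2 \<le> a \<Longrightarrow> T (a - 1) b \<or> (a - 1, b) \<in> M"
  using rk unfolding rp_def by fastforce
lemma Mst: "p \<in> M \<Longrightarrow> in_stair m p" using rj unfolding rp_def by simp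
lemma McolC: "(r, C) \<notin> M" using rj unfolding rp_def by simp
lemma McolK: "(r, K) \<notin> M" using rk unfolding rp_def by simp

lemma trC: "traverses m T C (r, c) \<longleftrightarrow> (c = C \<and> 1 \<le> r \<and> r \<le> t+1)
     \<or> (1 \<le> c \<and> c < C \<and> (r = E c \<or> (r = E c + 1 \<and> \<not> T (E c) c)))"
  using trav_char[OF vsC hsC C1 tC] .
lemma trK: "traverses m T K (r, c) \<longleftrightarrow> (c = K \<and> 1 \<le> r \<and> r \<le> s+1)
     \<or> (1 \<le> c \<and> c < K \<and> (r = F c \<or> (r = F c + 1 \<and> \<not> T (F c) c)))"
  using trav_char[OF vsK hsK K1 sK] .

lemma Erec: "1 \<le> c \<Longrightarrow> c < C \<Longrightarrow> E (c - 1) = (if T (E c) c then E c else E c + 1)"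
  using erow_step[of "c - 1" C T t] by simp
lemma Frec: "1 \<le> c \<Longrightarrow> c < K \<Longrightarrow> F (c - 1) = (if T (F c) c then F c else F c + 1)"
  using erow_step[of "c - 1" K T s] by simp
lemma Etop: "E (C - 1) = t + 1" by (simp add: erow_top)
lemma Ftop: "F (K - 1) = s + 1" by (simp add: erow_top)
lemma Ebd: "c < C \<Longrightarrow> E c + c \<le> m" using erow_bound[of c C T t] tC by simp
lemma Fbd: "c < K \<Longrightarrow> F c + c \<le> m" using erow_bound[of c K T s] sK by simp
lemma E1: "1 \<le> E c" by (rule erow_ge1)
lemma F1: "1 \<le> F c" by (rule erow_ge1)
lemma Ebump: "1 \<le> c \<Longrightarrow> c < C \<Longrightarrow> \<not> T (E c) c \<Longrightarrow> \<not> T (E c + 1) c"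
  using hsC unfolding hshape_def bcond_def by blast
lemma Fbump: "1 \<le> c \<Longrightarrow> c < K \<Longrightarrow> \<not> T (F c) c \<Longrightarrow> \<not> T (F c + 1) c"
  using hsK unfolding hshape_def bcond_def by blast
lemma EunM: "1 \<le> c \<Longrightarrow> c < C \<Longrightarrow> (E c, c) \<notin> M" using unmC trC by blast
lemma EunM1: "1 \<le> c \<Longrightarrow> c < C \<Longrightarrow> \<not> T (E c) c \<Longrightarrow> (E c + 1, c) \<notin> M" using unmC trC by blast
lemma FunM: "1 \<le> c \<Longrightarrow> c < K \<Longrightarrow> (F c, c) \<notin> M" using unmK trK by blast
lemma FunM1: "1 \<le> c \<Longrightarrow> c < K \<Longrightarrow> \<not> T (F c) c \<Longrightarrow> (F c + 1, c) \<notin> M" using unmK trK by blast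
lemma Eii: "1 \<le> c \<Longrightarrow> c < C \<Longrightarrow> T (E c) c \<Longrightarrow> 2 \<le> E c \<Longrightarrow> T (E c - 1) c \<or> (E c - 1, c) \<in> M"
  using iiC trC by blast
lemma Fii: "1 \<le> c \<Longrightarrow> c < K \<Longrightarrow> T (F c) c \<Longrightarrow> 2 \<le> F c \<Longrightarrow> T (F c - 1) c \<or> (F c - 1, c) \<in> M"
  using iiK trK by blast

lemma EF_ne: assumes "1 \<le> c" "c < C" "c < K" shows "E c \<noteq> F c"
proof
  assume e: "E c = F c"
  have "((E c, c), FromRight) \<in> visits m T C" using visR_char[OF vsC hsC C1 tC] assms by simp
  moreover have "((E c, c), FromRight) \<in> visits m T K" using visR_char[OF vsK hsK K1 sK] assms e by simp
  ultimately show False using visits_disj CK by blast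
qed

lemma order: assumes "1 \<le> c" "c + 1 < C" "c + 1 < K"
  shows "F c < E c \<longleftrightarrow> F (c+1) < E (c+1)"
proof -
  have a: "E c = (if T (E (c+1)) (c+1) then E (c+1) else E (c+1) + 1)" using Erec[of "c+1"] assms by simp
  have b: "F c = (if T (F (c+1)) (c+1) then F (c+1) else F (c+1) + 1)" using Frec[of "c+1"] assms by simp
  have "E c \<noteq> F c" using EF_ne assms by simp
  moreover have "E (c+1) \<noteq> F (c+1)" using EF_ne assms by simp
  ultimately show ?thesis using a b by (auto split: if_splits)
qed

lemma crossC: assumes "C < K"
  shows "if F (C-1) < t + 1 then F (C-1) = F C else F (C-1) = F C + 1 \<and> t + 1 < F (C-1)"
proof -
  have "F (C-1) = (if T (F C) C then F C else F C + 1)" using Frec[of C] C1 assms by simp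
  then show ?thesis using colC[of "F C"] F1[of C] by auto
qed

lemma m2: "2 \<le> m" using C1 K1 tC sK CK by linarith

definition "T' = PhiT m C E T"
definition "M' = PhiM m C E T M"
definition "K2 = (if K < C then K else K - 1)"
definition "s2 = (if K < C \<and> E K \<le> s then s - 1 else s)"
definition "F2 c = (if c < C then (if F c < E c then F c else F c - 1) else F (c+1))"

lemma T'_in: "in_stair (m-1) (i,c) \<Longrightarrow> T' i c = (if c < C then \<not> (i = E c \<and> \<not> T (E c) c) \<and> T (sr (E c) i) c else T i (c+1))"
  unfolding T'_def PhiT_def by simp
lemma T'_out: "\<not> in_stair (m-1) (i,c) \<Longrightarrow> \<not> T' i c"
  unfolding T'_def PhiT_def by simp
lemma M'_iff: "(i,c) \<in> M' \<longleftrightarrow> in_stair (m-1) (i,c) \<and> (if c < C then \<not> (i = E c \<and> \<not> T (E c) c) \<and> (sr (E c) i, c) \<in> M else (i, c+1) \<in> M)"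
  unfolding M'_def PhiM_def by simp

context fixes c assumes c1: "1 \<le> c" and cC: "c < C" and cK: "c < K"
begin
lemma lo_st: "in_stair (m-1) (F2 c, c)" "in_stair (m-1) (F2 c + 1, c)"
  using EF_ne[OF c1 cC cK] Ebd[OF cC] Fbd[OF cK] F1[of c] E1[of c] c1 cC
  unfolding in_stair_def F2_def by auto
lemma lo_sr: "sr (E c) (F2 c) = F c"
  using EF_ne[OF c1 cC cK] cC unfolding F2_def sr_def by auto
lemma lo_T: "T' (F2 c) c = T (F c) c"
proof -
  have "T' (F2 c) c = (\<not> (F2 c = E c \<and> \<not> T (E c) c) \<and> T (F c) c)"
    using T'_in[OF lo_st(1)] cC lo_sr by simp
  moreover have "F2 c = E c \<and> \<not> T (E c) c \<Longrightarrow> \<not> T (F c) c"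
  proof -
    assume a: "F2 c = E c \<and> \<not> T (E c) c"
    then have "F c = E c + 1" using EF_ne[OF c1 cC cK] cC unfolding F2_def by (auto split: if_splits)
    then show ?thesis using Ebump[OF c1 cC] a by simp
  qed
  ultimately show ?thesis by blast
qed
lemma lo_T1: assumes "\<not> T (F c) c" shows "\<not> T' (F2 c + 1) c"
proof (cases "F c < E c")
  case True
  show ?thesis
  proof (cases "F c + 1 = E c")
    case True
    then have "\<not> T (E c) c" using Fbump[OF c1 cK assms] by simp
    then show ?thesis using T'_in[OF lo_st(2)] cC True \<open>F c < E c\<close> unfolding F2_def by simp
  next
    case False
    then show ?thesis using T'_in[OF lo_st(2)] cC True Fbump[OF c1 cK assms] unfolding F2_def sr_def by simp
  qed
next
  case False
  then have "E c < F c" using EF_ne[OF c1 cC cK] by simp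
  then show ?thesis using T'_in[OF lo_st(2)] cC Fbump[OF c1 cK assms] F1[of c] unfolding F2_def sr_def by simp
qed
lemma lo_M: "(F2 c, c) \<notin> M'"
  using M'_iff lo_sr FunM[OF c1 cK] cC by simp
lemma lo_M1: assumes "\<not> T (F c) c" shows "(F2 c + 1, c) \<notin> M'"
proof (cases "F c < E c")
  case True
  show ?thesis
  proof (cases "F c + 1 = E c")
    case True
    then have "\<not> T (E c) c" using Fbump[OF c1 cK assms] by simp
    then show ?thesis using M'_iff cC True \<open>F c < E c\<close> unfolding F2_def by simp
  next
    case False
    then show ?thesis using M'_iff cC True FunM1[OF c1 cK assms] unfolding F2_def sr_def by simp
  qed
next
  case False
  then have "E c < F c" using EF_ne[OF c1 cC cK] by simp
  then show ?thesis using M'_iff cC FunM1[OF c1 cK assms] F1[of c] unfolding F2_def sr_def by simp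
qed
end

context fixes c assumes c1: "1 \<le> c" and cC: "C \<le> c" and cK: "c + 1 < K"
begin
lemma hi_F2: "F2 c = F (c+1)" using cC unfolding F2_def by simp
lemma hi_st: "in_stair (m-1) (F (c+1), c)" "in_stair (m-1) (F (c+1) + 1, c)"
  using Fbd[OF cK] F1[of "c+1"] c1 cK unfolding in_stair_def by auto
lemma hi_T: "T' (F2 c) c = T (F (c+1)) (c+1)"
  using T'_in[OF hi_st(1)] cC hi_F2 by simp
lemma hi_T1: "T' (F2 c + 1) c = T (F (c+1) + 1) (c+1)"
  using T'_in[OF hi_st(2)] cC hi_F2 by simp
lemma hi_M: "(F2 c, c) \<in> M' \<longleftrightarrow> (F (c+1), c+1) \<in> M"
  using M'_iff hi_st cC hi_F2 by simp
lemma hi_M1: "(F2 c + 1, c) \<in> M' \<longleftrightarrow> (F (c+1) + 1, c+1) \<in> M"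
  using M'_iff hi_st cC hi_F2 by simp
end

end

context two begin

lemma K2_1: "1 \<le> K2" using K1 C1 CK unfolding K2_def by auto
lemma K2_le: "K2 \<le> K" unfolding K2_def by auto

lemma s2K2: "s2 + K2 \<le> m - 1"
proof (cases "K < C")
  case True
  have "E K + K \<le> m" using Ebd True by simp
  then show ?thesis using True sK E1[of K] unfolding s2_def K2_def by auto
next
  case False
  then show ?thesis using sK K1 unfolding s2_def K2_def by auto
qed

lemma colK2: "T' r K2 \<longleftrightarrow> 1 \<le> r \<and> r \<le> s2"
proof (cases "K < C")
  case False
  then have KC: "C < K" using CK by simp
  have "T' r (K - 1) \<longleftrightarrow> 1 \<le> r \<and> r \<le> s"
  proof (cases "in_stair (m-1) (r, K-1)")
    case True
    have "\<not> K - 1 < C" using KC by simp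
    then show ?thesis using T'_in[OF True] KC colK K1 by simp
  next
    case f: False
    then show ?thesis using T'_out[OF f] sK K1 KC C1 unfolding in_stair_def by auto
  qed
  then show ?thesis using False unfolding K2_def s2_def by simp
next
  case True
  have eb: "E K + K \<le> m" using Ebd True by simp
  have e1: "1 \<le> E K" by (rule E1)
  show ?thesis
  proof (cases "in_stair (m-1) (r, K)")
    case st: True
    have "T' r K = (\<not> (r = E K \<and> \<not> T (E K) K) \<and> T (sr (E K) r) K)" using T'_in[OF st] True by simp
    then show ?thesis using True colK[of "E K"] colK[of "sr (E K) r"] st e1 unfolding K2_def s2_def sr_def in_stair_def
      by (auto split: if_splits)
  next
    case st: False
    then show ?thesis using T'_out[OF st] True eb e1 sK K1 unfolding K2_def s2_def in_stair_def by auto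
  qed
qed

lemma vsK2: "vshape T' K2 s2" unfolding vshape_def using colK2 by simp

lemma F2_hi: assumes "C < K" "C - 1 \<le> c" "c + 1 < K"
  shows "F2 c = F (c+1)"
proof (cases "c < C")
  case True
  then have cc: "c = C - 1" using assms by simp
  have "E c = t + 1" using cc Etop by simp
  then show ?thesis using crossC[OF assms(1)] True cc C1 unfolding F2_def by (auto split: if_splits)
next
  case False then show ?thesis unfolding F2_def by simp
qed

lemma erowF2: "1 \<le> c \<Longrightarrow> c < K2 \<Longrightarrow> erow T' K2 s2 c = F2 c"
proof (induction "K2 - c" arbitrary: c)
  case 0 then show ?case by simp
next
  case (Suc x)
  show ?case
  proof (cases "K2 \<le> c + 1")
    case True
    then have cK2: "c = K2 - 1" using Suc.prems by simp
    have "F2 c = s2 + 1"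
    proof (cases "K < C")
      case KC: True
      then have cK: "c = K - 1" "c < C" "c < K" using cK2 K1 unfolding K2_def by auto
      have "E c = (if T (E K) K then E K else E K + 1)" using Erec[of K] KC K1 cK by simp
      moreover have "F c = s + 1" using Ftop cK by simp
      moreover have "E c \<noteq> F c" using EF_ne[of c] Suc.prems cK by simp
      ultimately show ?thesis using KC colK[of "E K"] E1[of K] cK(2) unfolding F2_def s2_def by (auto split: if_splits)
    next
      case False
      then have KC: "C < K" using CK by simp
      then have "c = K - 2" using cK2 unfolding K2_def by simp
      moreover have "Suc (K - 2) = K - 1" using KC C1 by simp
      ultimately have "F2 c = F (K - 1)" using F2_hi[OF KC, of c] Suc.prems KC C1 by (cases "C - 1 \<le> c") auto
      then show ?thesis using Ftop False unfolding s2_def by simp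
    qed
    then show ?thesis using True by (simp add: erow_top)
  next
    case False
    have IH: "erow T' K2 s2 (c+1) = F2 (c+1)" using Suc.hyps(1)[of "c+1"] Suc.hyps(2) Suc.prems False by simp
    have er: "erow T' K2 s2 c = (if T' (F2 (c+1)) (c+1) then F2 (c+1) else F2 (c+1) + 1)"
      using erow_step[of c K2 T' s2] False IH by simp
    have "F2 c = (if T' (F2 (c+1)) (c+1) then F2 (c+1) else F2 (c+1) + 1)"
    proof (cases "c + 1 < C")
      case True
      have cK: "c + 1 < K" using False K2_le by simp
      have t: "T' (F2 (c+1)) (c+1) = T (F (c+1)) (c+1)" using lo_T[of "c+1"] True cK by simp
      have f: "F c = (if T (F (c+1)) (c+1) then F (c+1) else F (c+1) + 1)" using Frec[of "c+1"] cK by simp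
      have o: "F c < E c \<longleftrightarrow> F (c+1) < E (c+1)" using order[of c] Suc.prems True cK by simp
      have n: "E c \<noteq> F c" "E (c+1) \<noteq> F (c+1)" using EF_ne[of c] EF_ne[of "c+1"] Suc.prems True cK by auto
      show ?thesis unfolding t using f o n True F1[of "c+1"] unfolding F2_def by (auto split: if_splits)
    next
      case f: False
      then have KC: "C < K" using False Suc.prems CK unfolding K2_def by (auto split: if_splits)
      then have cK: "c + 2 < K" using False unfolding K2_def by simp
      have t: "T' (F2 (c+1)) (c+1) = T (F (c+2)) (c+2)" using hi_T[of "c+1"] f cK by simp
      have f2: "F2 (c+1) = F (c+2)" using hi_F2[of "c+1"] f cK by simp
      have f1: "F2 c = F (c+1)" using F2_hi[OF KC, of c] f cK by simp
      have "F (c+1) = (if T (F (c+2)) (c+2) then F (c+2) else F (c+2) + 1)" using Frec[of "c+2"] cK by simp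
      then show ?thesis using t f2 f1 by simp
    qed
    then show ?thesis using er by simp
  qed
qed

lemma hsK2: "hshape T' K2 s2"
  unfolding hshape_def bcond_def
proof (intro allI impI)
  fix c assume c: "1 \<le> c \<and> c < K2" and n: "\<not> T' (erow T' K2 s2 c) c"
  have e: "erow T' K2 s2 c = F2 c" using erowF2 c by simp
  show "\<not> T' (erow T' K2 s2 c + 1) c"
  proof (cases "c < C")
    case True
    then have cK: "c < K" using c K2_le by simp
    then show ?thesis using lo_T[of c] lo_T1[of c] c True n e by simp
  next
    case False
    then have KC: "C < K" using c CK unfolding K2_def by (auto split: if_splits)
    then have cK: "c + 1 < K" using c KC unfolding K2_def by auto
    then show ?thesis using hi_T[of c] hi_T1[of c] Fbump[of "c+1"] c False n e by simp
  qed
qed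

lemma trK2: "traverses (m-1) T' K2 (r, c) \<longleftrightarrow> (c = K2 \<and> 1 \<le> r \<and> r \<le> s2+1)
     \<or> (1 \<le> c \<and> c < K2 \<and> (r = F2 c \<or> (r = F2 c + 1 \<and> \<not> T' (F2 c) c)))"
  using trav_char[OF vsK2 hsK2 K2_1 s2K2] erowF2 by auto

lemma MK2: "(r, K2) \<notin> M'"
proof (cases "K < C")
  case True then show ?thesis using M'_iff McolK unfolding K2_def by simp
next
  case False
  then have "C < K" using CK by simp
  moreover have "\<not> K - 1 < C" using \<open>C < K\<close> by simp
  ultimately show ?thesis using M'_iff McolK K1 unfolding K2_def by simp
qed

lemma lo_ii: assumes c1: "1 \<le> c" and cC: "c < C" and cK: "c < K" and tf: "T (F c) c" and f2: "2 \<le> F2 c"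
  shows "T' (F2 c - 1) c \<or> (F2 c - 1, c) \<in> M'"
proof -
  have st: "in_stair (m-1) (F2 c - 1, c)" using lo_st(1)[OF c1 cC cK] f2 unfolding in_stair_def by auto
  have T'e: "T' (F2 c - 1) c = (\<not> (F2 c - 1 = E c \<and> \<not> T (E c) c) \<and> T (sr (E c) (F2 c - 1)) c)"
    using T'_in[OF st] cC by simp
  have M'e: "(F2 c - 1, c) \<in> M' = (\<not> (F2 c - 1 = E c \<and> \<not> T (E c) c) \<and> (sr (E c) (F2 c - 1), c) \<in> M)"
    using M'_iff st cC by simp
  have ne: "E c \<noteq> F c" using EF_ne[OF c1 cC cK] .
  show ?thesis
  proof (cases "F c < E c")
    case True
    then have "F2 c = F c" unfolding F2_def using cC by simp
    then show ?thesis using T'e M'e Fii[OF c1 cK tf] f2 True unfolding sr_def by auto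
  next
    case False
    then have lt: "E c < F c" using ne by simp
    then have f2e: "F2 c = F c - 1" unfolding F2_def using cC by simp
    consider "E c < F c - 2" | "E c = F c - 2" | "E c = F c - 1" using lt by linarith
    then show ?thesis
    proof cases
      case 1
      have x: "sr (E c) (F2 c - 1) = F c - 1" "F2 c - 1 \<noteq> E c" "2 \<le> F c" using 1 f2 f2e unfolding sr_def by auto
      then show ?thesis using T'e M'e Fii[OF c1 cK tf] by auto
    next
      case 2
      show ?thesis
      proof (cases "T (E c) c")
        case True
        have x: "sr (E c) (F2 c - 1) = F c - 1" "\<not> (F2 c - 1 = E c \<and> \<not> T (E c) c)" "2 \<le> F c"
          using 2 f2 f2e True unfolding sr_def by auto
        then show ?thesis using T'e M'e Fii[OF c1 cK tf] by auto
      next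
        case False
        have "F c - 1 = E c + 1" using 2 f2 f2e by simp
        then have "\<not> T (F c - 1) c" "(F c - 1, c) \<notin> M" using Ebump[OF c1 cC False] EunM1[OF c1 cC False] by auto
        moreover have "2 \<le> F c" using f2 f2e by simp
        ultimately show ?thesis using Fii[OF c1 cK tf] by blast
      qed
    next
      case 3
      have te: "T (E c) c"
      proof (rule ccontr)
        assume "\<not> T (E c) c"
        then have "\<not> T (E c + 1) c" using Ebump[OF c1 cC] by blast
        moreover have "E c + 1 = F c" using 3 lt by simp
        ultimately show False using tf by simp
      qed
      have "2 \<le> E c" using 3 f2 f2e by simp
      then show ?thesis using T'e M'e Eii[OF c1 cC te] f2e 3 unfolding sr_def by auto
    qed
  qed
qed

lemma antid: "1 \<le> r \<Longrightarrow> r \<le> m \<Longrightarrow> \<not> T r (m + 1 - r)"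
  using pd unfolding pipe_dream_def by blast

lemma pd': "pipe_dream (m-1) T'"
  unfolding pipe_dream_def
proof (intro conjI allI impI)
  fix i c assume "T' i c" then show "in_stair (m-1) (i, c)" using T'_out by blast
next
  fix i assume i: "1 \<le> i \<and> i \<le> m - 1"
  define c where "c = m - i"
  have m1: "m - 1 + 1 = m" using m2 by arith
  have cc: "m - 1 + 1 - i = c" unfolding c_def m1 ..
  have ic: "i + c = m" unfolding c_def using i m2 by arith
  have c1: "1 \<le> c" unfolding c_def using i m2 by arith
  have st: "in_stair (m-1) (i, c)" unfolding in_stair_def using i c1 ic m1 by simp
  have "\<not> T' i c"
  proof (cases "c < C")
    case True
    then have "E c + c \<le> m" using Ebd by blast
    then have "\<not> i < E c" using ic by linarith
    then have sr1: "sr (E c) i = i + 1" unfolding sr_def by simp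
    have eq: "c = m + 1 - (i+1)" using ic by arith
    have b: "1 \<le> i + 1" "i + 1 \<le> m" using i m2 by arith+
    have "\<not> T (i+1) c" unfolding eq by (rule antid[OF b])
    then have "\<not> T (sr (E c) i) c" unfolding sr1 .
    then show ?thesis using T'_in[OF st] True by simp
  next
    case False
    have eq: "c + 1 = m + 1 - i" using ic by arith
    have b: "1 \<le> i" "i \<le> m" using i by arith+
    have "\<not> T i (c + 1)" unfolding eq by (rule antid[OF b])
    then show ?thesis using T'_in[OF st] False by simp
  qed
  then show "\<not> T' i (m - 1 + 1 - i)" unfolding cc .
qed

lemma rp': "rp (m-1) T' M' K2 s2"
  unfolding rp_def
proof (intro conjI allI impI ballI)
  show "pipe_dream (m-1) T'" by (rule pd')
  show "1 \<le> K2" by (rule K2_1)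
  show "s2 + K2 \<le> m - 1" by (rule s2K2)
  show "vshape T' K2 s2" by (rule vsK2)
  show "hshape T' K2 s2" by (rule hsK2)
  show "\<And>r. T' r K2 = (1 \<le> r \<and> r \<le> s2)" by (rule colK2)
  show "\<And>r. (r, K2) \<notin> M'" by (rule MK2)
  show "\<And>p. p \<in> M' \<Longrightarrow> in_stair (m - 1) p" using M'_iff by auto
next
  fix p :: "nat \<times> nat" assume tr: "traverses (m-1) T' K2 p"
  obtain r c where p: "p = (r, c)" by (cases p)
  show "p \<notin> M'"
  proof (cases "c = K2")
    case True then show ?thesis using MK2 p by simp
  next
    case False
    then have c: "1 \<le> c" "c < K2" "r = F2 c \<or> (r = F2 c + 1 \<and> \<not> T' (F2 c) c)" using tr trK2 p by auto
    show ?thesis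
    proof (cases "c < C")
      case True
      then have cK: "c < K" using c K2_le by simp
      then show ?thesis using c lo_M[OF c(1) True cK] lo_M1[OF c(1) True cK] lo_T[OF c(1) True cK] p by auto
    next
      case f: False
      then have KC: "C < K" using c CK unfolding K2_def by (auto split: if_splits)
      then have cK: "c + 1 < K" using c KC unfolding K2_def by auto
      have "1 \<le> c + 1" by simp
      then show ?thesis using c hi_M[of c] hi_M1[of c] hi_T[of c] FunM[of "c+1"] FunM1[of "c+1"] f cK p by auto
    qed
  qed
next
  fix p :: "nat \<times> nat" assume a: "T' (fst p) (snd p) \<and> traverses (m-1) T' K2 p \<and> 2 \<le> fst p"
  obtain r c where p: "p = (r, c)" by (cases p)
  show "T' (fst p - 1) (snd p) \<or> (fst p - 1, snd p) \<in> M'"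
  proof (cases "c = K2")
    case True
    then show ?thesis using a colK2[of r] colK2[of "r-1"] p by auto
  next
    case False
    then have c: "1 \<le> c" "c < K2" "r = F2 c \<or> (r = F2 c + 1 \<and> \<not> T' (F2 c) c)" using a trK2 p by auto
    have rr: "r = F2 c" "T' (F2 c) c"
    proof -
      have "r = F2 c"
      proof (rule ccontr)
        assume "r \<noteq> F2 c"
        then have "r = F2 c + 1" "\<not> T' (F2 c) c" using c by auto
        then have "\<not> T' r c" using hsK2 c erowF2 unfolding hshape_def bcond_def by auto
        then show False using a p by simp
      qed
      then show "r = F2 c" "T' (F2 c) c" using a p by auto
    qed
    show ?thesis
    proof (cases "c < C")
      case True
      then have cK: "c < K" using c K2_le by simp
      then show ?thesis using lo_ii[OF c(1) True cK] lo_T[OF c(1) True cK] rr a p by auto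
    next
      case f: False
      then have KC: "C < K" using c CK unfolding K2_def by (auto split: if_splits)
      then have cK: "c + 1 < K" using c KC unfolding K2_def by auto
      have tf: "T (F (c+1)) (c+1)" using hi_T[of c] rr c f cK by simp
      have f2: "F2 c = F (c+1)" using hi_F2[of c] c f cK by simp
      have "2 \<le> F (c+1)" using a p rr f2 by simp
      then have ii: "T (F (c+1) - 1) (c+1) \<or> (F (c+1) - 1, c+1) \<in> M" using Fii[of "c+1"] tf cK by simp
      have st: "in_stair (m-1) (F (c+1) - 1, c)" using hi_st(1)[of c] c f cK \<open>2 \<le> F (c+1)\<close> unfolding in_stair_def by auto
      show ?thesis using ii T'_in[OF st] M'_iff[of "F (c+1) - 1" c] st f p rr f2 by simp
    qed
  qed
qed

end

lemma sr_le: "sr e i \<le> i + 1" unfolding sr_def by simp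

context two begin

lemma comm:
  assumes KC: "C < K"
  shows "PhiT (m-1) (K-1) F2 T' = PhiT (m-1) C (\<lambda>c. if c < K then (if E c < F c then E c else E c - 1) else E (c+1)) (PhiT m K F T)"
    and "PhiM (m-1) (K-1) F2 T' M' = PhiM (m-1) C (\<lambda>c. if c < K then (if E c < F c then E c else E c - 1) else E (c+1)) (PhiT m K F T) (PhiM m K F T M)"
proof -
  interpret B: two m T M K s C t using rk rj CK by unfold_locales auto
  have BF2: "(\<lambda>c. if c < K then (if E c < F c then E c else E c - 1) else E (c+1)) = B.F2"
    by (rule ext) (simp add: B.F2_def)
  have BT': "PhiT m K F T = B.T'" by (simp add: B.T'_def)
  have BM': "PhiM m K F T M = B.M'" by (simp add: B.M'_def)
  have KC1: "C \<le> K - 1" using KC by simp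
  have main: "(PhiT (m-1) (K-1) F2 T' i c = PhiT (m-1) C B.F2 B.T' i c) \<and>
              ((i, c) \<in> PhiM (m-1) (K-1) F2 T' M' \<longleftrightarrow> (i, c) \<in> PhiM (m-1) C B.F2 B.T' B.M')" for i c
  proof (cases "in_stair (m-1-1) (i,c)")
    case False
    then show ?thesis unfolding PhiT_def PhiM_def by simp
  next
    case st: True
    have b: "1 \<le> i" "1 \<le> c" "i + c \<le> m - 1" using st m2 unfolding in_stair_def by auto
    have stx: "in_stair (m-1) (x, c)" if "1 \<le> x" "x \<le> i + 1" for x
      using b that m2 unfolding in_stair_def by auto
    have stc: "in_stair (m-1) (i, c + 1)" using b m2 unfolding in_stair_def by auto
    consider (lo) "c < C" | (mid) "C \<le> c" "c < K - 1" | (hi) "K - 1 \<le> c" by linarith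
    then show ?thesis
    proof cases
      case lo
      have cK: "c < K" using lo KC by simp
      have cK1: "c < K - 1" using lo KC by simp
      let ?a = "E c" and ?b = "F c" and ?A = "T (E c) c" and ?B = "T (F c) c"
      have L: "PhiT (m-1) (K-1) F2 T' i c = (\<not> (i = F2 c \<and> \<not> T' (F2 c) c) \<and> T' (sr (F2 c) i) c)"
        using st cK1 unfolding PhiT_def by simp
      have R: "PhiT (m-1) C B.F2 B.T' i c = (\<not> (i = B.F2 c \<and> \<not> B.T' (B.F2 c) c) \<and> B.T' (sr (B.F2 c) i) c)"
        using st lo unfolding PhiT_def by simp
      have LM: "(i, c) \<in> PhiM (m-1) (K-1) F2 T' M' = (\<not> (i = F2 c \<and> \<not> T' (F2 c) c) \<and> (sr (F2 c) i, c) \<in> M')"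
        using st cK1 unfolding PhiM_def by simp
      have RM: "(i, c) \<in> PhiM (m-1) C B.F2 B.T' B.M' = (\<not> (i = B.F2 c \<and> \<not> B.T' (B.F2 c) c) \<and> (sr (B.F2 c) i, c) \<in> B.M')"
        using st lo unfolding PhiM_def by simp
      have f2: "F2 c = (if ?b < ?a then ?b else ?b - 1)" using lo unfolding F2_def by simp
      have bf2: "B.F2 c = (if ?a < ?b then ?a else ?a - 1)" using cK unfolding B.F2_def by simp
      have t1: "T' (F2 c) c = ?B" using lo_T[OF b(2) lo cK] .
      have t2: "B.T' (B.F2 c) c = ?A" using B.lo_T[OF b(2) cK lo] .
      have sx1: "1 \<le> sr (F2 c) i" "sr (F2 c) i \<le> i + 1" using b(1) sr_le unfolding sr_def by auto
      have sx2: "1 \<le> sr (B.F2 c) i" "sr (B.F2 c) i \<le> i + 1" using b(1) sr_le unfolding sr_def by auto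
      have t3: "T' (sr (F2 c) i) c = (\<not> (sr (F2 c) i = ?a \<and> \<not> ?A) \<and> T (sr ?a (sr (F2 c) i)) c)"
        using T'_in[OF stx[OF sx1]] lo by simp
      have t4: "B.T' (sr (B.F2 c) i) c = (\<not> (sr (B.F2 c) i = ?b \<and> \<not> ?B) \<and> T (sr ?b (sr (B.F2 c) i)) c)"
        using B.T'_in[OF stx[OF sx2]] cK by simp
      have m3: "(sr (F2 c) i, c) \<in> M' = (\<not> (sr (F2 c) i = ?a \<and> \<not> ?A) \<and> (sr ?a (sr (F2 c) i), c) \<in> M)"
        using M'_iff stx[OF sx1] lo by simp
      have m4: "(sr (B.F2 c) i, c) \<in> B.M' = (\<not> (sr (B.F2 c) i = ?b \<and> \<not> ?B) \<and> (sr ?b (sr (B.F2 c) i), c) \<in> M)"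
        using B.M'_iff stx[OF sx2] cK by simp
      have ne: "?a \<noteq> ?b" using EF_ne[OF b(2) lo cK] .
      have h1: "\<not> ?A \<longrightarrow> \<not> T (?a + 1) c" using Ebump[OF b(2) lo] by blast
      have h2: "\<not> ?B \<longrightarrow> \<not> T (?b + 1) c" using Fbump[OF b(2) cK] by blast
      have h3: "(?a, c) \<notin> M" using EunM[OF b(2) lo] .
      have h4: "\<not> ?A \<longrightarrow> (?a + 1, c) \<notin> M" using EunM1[OF b(2) lo] by blast
      have h5: "(?b, c) \<notin> M" using FunM[OF b(2) cK] .
      have h6: "\<not> ?B \<longrightarrow> (?b + 1, c) \<notin> M" using FunM1[OF b(2) cK] by blast
      have cg: "(\<not> (i = (if ?b < ?a then ?b else ?b - 1) \<and> \<not> ?B) \<and> \<not> (sr (if ?b < ?a then ?b else ?b - 1) i = ?a \<and> \<not> ?A) \<and> T (sr ?a (sr (if ?b < ?a then ?b else ?b - 1) i)) c)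
       = (\<not> (i = (if ?a < ?b then ?a else ?a - 1) \<and> \<not> ?A) \<and> \<not> (sr (if ?a < ?b then ?a else ?a - 1) i = ?b \<and> \<not> ?B) \<and> T (sr ?b (sr (if ?a < ?b then ?a else ?a - 1) i)) c)"
        by (rule col_comm_g[where h = "\<lambda>r. (r, c) \<in> M"]) (use ne h1 h2 h3 h4 h5 h6 in auto)
      have ch: "(\<not> (i = (if ?b < ?a then ?b else ?b - 1) \<and> \<not> ?B) \<and> \<not> (sr (if ?b < ?a then ?b else ?b - 1) i = ?a \<and> \<not> ?A) \<and> (sr ?a (sr (if ?b < ?a then ?b else ?b - 1) i), c) \<in> M)
       = (\<not> (i = (if ?a < ?b then ?a else ?a - 1) \<and> \<not> ?A) \<and> \<not> (sr (if ?a < ?b then ?a else ?a - 1) i = ?b \<and> \<not> ?B) \<and> (sr ?b (sr (if ?a < ?b then ?a else ?a - 1) i), c) \<in> M)"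
        by (rule col_comm_h[where g = "\<lambda>r. T r c"]) (use ne h1 h2 h3 h4 h5 h6 in auto)
      have e1: "PhiT (m-1) (K-1) F2 T' i c = PhiT (m-1) C B.F2 B.T' i c"
        unfolding L R t1 t2 t3 t4 using cg unfolding f2 bf2 by simp
      have e2: "(i, c) \<in> PhiM (m-1) (K-1) F2 T' M' \<longleftrightarrow> (i, c) \<in> PhiM (m-1) C B.F2 B.T' B.M'"
        unfolding LM RM t1 t2 m3 m4 using ch unfolding f2 bf2 by simp
      show ?thesis using e1 e2 by simp
    next
      case mid
      have c1K: "c + 1 < K" using mid by simp
      have f2: "F2 c = F (c+1)" using hi_F2[OF b(2) mid(1) c1K] .
      have t1: "T' (F2 c) c = T (F (c+1)) (c+1)" using hi_T[OF b(2) mid(1) c1K] .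
      have sx1: "1 \<le> sr (F2 c) i" "sr (F2 c) i \<le> i + 1" using b(1) sr_le unfolding sr_def by auto
      have t3: "T' (sr (F2 c) i) c = T (sr (F2 c) i) (c+1)" using T'_in[OF stx[OF sx1]] mid by simp
      have m3: "(sr (F2 c) i, c) \<in> M' = ((sr (F2 c) i, c+1) \<in> M)" using M'_iff stx[OF sx1] mid by simp
      have L: "PhiT (m-1) (K-1) F2 T' i c = (\<not> (i = F2 c \<and> \<not> T' (F2 c) c) \<and> T' (sr (F2 c) i) c)"
        using st mid unfolding PhiT_def by simp
      have R: "PhiT (m-1) C B.F2 B.T' i c = B.T' i (c+1)"
        using st mid unfolding PhiT_def by simp
      have LM: "(i, c) \<in> PhiM (m-1) (K-1) F2 T' M' = (\<not> (i = F2 c \<and> \<not> T' (F2 c) c) \<and> (sr (F2 c) i, c) \<in> M')"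
        using st mid unfolding PhiM_def by simp
      have RM: "(i, c) \<in> PhiM (m-1) C B.F2 B.T' B.M' = ((i, c+1) \<in> B.M')"
        using st mid unfolding PhiM_def by simp
      have r1: "B.T' i (c+1) = (\<not> (i = F (c+1) \<and> \<not> T (F (c+1)) (c+1)) \<and> T (sr (F (c+1)) i) (c+1))"
        using B.T'_in[OF stc] c1K by simp
      have r2: "(i, c+1) \<in> B.M' = (\<not> (i = F (c+1) \<and> \<not> T (F (c+1)) (c+1)) \<and> (sr (F (c+1)) i, c+1) \<in> M)"
        using B.M'_iff stc c1K by simp
      show ?thesis unfolding L R LM RM t1 t3 m3 unfolding r1 r2 f2 by simp
    next
      case hi
      have cC: "\<not> c < C" "\<not> c < K - 1" using hi KC by auto
      have L: "PhiT (m-1) (K-1) F2 T' i c = T' i (c+1)" using st cC unfolding PhiT_def by simp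
      have R: "PhiT (m-1) C B.F2 B.T' i c = B.T' i (c+1)" using st cC unfolding PhiT_def by simp
      have LM: "(i, c) \<in> PhiM (m-1) (K-1) F2 T' M' = ((i, c+1) \<in> M')" using st cC unfolding PhiM_def by simp
      have RM: "(i, c) \<in> PhiM (m-1) C B.F2 B.T' B.M' = ((i, c+1) \<in> B.M')" using st cC unfolding PhiM_def by simp
      have nc: "\<not> c + 1 < C" "\<not> c + 1 < K" using hi KC by auto
      show ?thesis unfolding L R LM RM using T'_in[OF stc] B.T'_in[OF stc] M'_iff[of i "c+1"] B.M'_iff[of i "c+1"] stc nc by simp
    qed
  qed
  show "PhiT (m-1) (K-1) F2 T' = PhiT (m-1) C (\<lambda>c. if c < K then (if E c < F c then E c else E c - 1) else E (c+1)) (PhiT m K F T)"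
    unfolding BF2 BT' using main by (intro ext) blast
  show "PhiM (m-1) (K-1) F2 T' M' = PhiM (m-1) C (\<lambda>c. if c < K then (if E c < F c then E c else E c - 1) else E (c+1)) (PhiT m K F T) (PhiM m K F T M)"
    unfolding BF2 BT' BM' using main by auto
qed

end

lemma len_removeAll: "distinct v \<Longrightarrow> j \<in> set v \<Longrightarrow> length (removeAll j v) = length v - 1"
  by (metis distinct_remove1_removeAll length_remove1)

context two begin
lemma PhiF2: "(PhiT (m-1) K2 (erow T' K2 s2) T', PhiM (m-1) K2 (erow T' K2 s2) T' M') = (PhiT (m-1) K2 F2 T', PhiM (m-1) K2 F2 T' M')"
  using PhiT_cong[of K2 "erow T' K2 s2" F2] PhiM_cong[of K2 "erow T' K2 s2" F2] erowF2 by simp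
end

theorem proposition3p3:
  fixes v :: "nat list" and P :: mpd and j j' :: nat
  assumes "distinct v" and "\<forall>x \<in> set v. 0 < x"
    and "P \<in> MRPD v"
    and "removable v P j" and "removable v P j'" and "j \<noteq> j'"
  shows "removable (removeAll j v) (Phi v P j) j'
         \<and> Phi (removeAll j v) (Phi v P j) j' = Phi (removeAll j' v) (Phi v P j') j"
proof -
  obtain T M where P: "P = (T, M)" by (cases P)
  define m where "m = length v"
  have jv: "j \<in> set v" "j' \<in> set v" using assms(4,5) unfolding removable_def by auto
  define C where "C = col v j"
  define K where "K = col v j'"
  have Cr: "1 \<le> C" "C \<le> m" using col_range[OF assms(1) jv(1)] unfolding C_def m_def by auto
  have Kr: "1 \<le> K" "K \<le> m" using col_range[OF assms(1) jv(2)] unfolding K_def m_def by auto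
  have CK: "C \<noteq> K" using col_inj[OF assms(1) jv assms(6)] unfolding C_def K_def .
  obtain t where rj: "rp m T M C t" using removable_rp[of T M v j C] assms(3,4) P Cr unfolding C_def m_def by auto
  obtain s where rk: "rp m T M K s" using removable_rp[of T M v j' K] assms(3,5) P Kr unfolding K_def m_def by auto
  interpret A: two m T M C t K s using rj rk CK by unfold_locales
  interpret B: two m T M K s C t using rj rk CK by unfold_locales auto
  have lenA: "length (removeAll j v) = m - 1" using len_removeAll[OF assms(1) jv(1)] m_def by simp
  have lenB: "length (removeAll j' v) = m - 1" using len_removeAll[OF assms(1) jv(2)] m_def by simp
  have crA: "col (removeAll j v) j' = (if K < C then K else K - 1)"
    unfolding C_def K_def by (rule col_remove[OF assms(1) jv(1,2) assms(6)])
  have crB: "col (removeAll j' v) j = (if C < K then C else C - 1)"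
    unfolding C_def K_def using col_remove[OF assms(1) jv(2,1)] assms(6) by simp
  have colA: "col (removeAll j v) j' = A.K2" using crA A.K2_def by simp
  have colB: "col (removeAll j' v) j = B.K2" using crB B.K2_def by simp
  have PhiA: "Phi v P j = (A.T', A.M')"
  proof -
    have "Phi v (T,M) j = (PhiT m C (erow T C t) T, PhiM m C (erow T C t) T M)"
      by (rule Phi_eq[OF rj]) (simp_all add: m_def C_def)
    then show ?thesis using P A.T'_def A.M'_def by simp
  qed
  have PhiB: "Phi v P j' = (B.T', B.M')"
  proof -
    have "Phi v (T,M) j' = (PhiT m K (erow T K s) T, PhiM m K (erow T K s) T M)"
      by (rule Phi_eq[OF rk]) (simp_all add: m_def K_def)
    then show ?thesis using P B.T'_def B.M'_def by simp
  qed
  have jin': "j' \<in> set (removeAll j v)" using jv assms(6) by simp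
  have jin: "j \<in> set (removeAll j' v)" using jv assms(6) by simp
  have r1: "removable (removeAll j v) (Phi v P j) j'"
    unfolding PhiA by (rule rp_removable[OF A.rp' lenA jin' colA])
  have PA: "Phi (removeAll j v) (Phi v P j) j' = (PhiT (m-1) A.K2 A.F2 A.T', PhiM (m-1) A.K2 A.F2 A.T' A.M')"
    unfolding PhiA using Phi_eq[OF A.rp' lenA colA] A.PhiF2 by simp
  have PB: "Phi (removeAll j' v) (Phi v P j') j = (PhiT (m-1) B.K2 B.F2 B.T', PhiM (m-1) B.K2 B.F2 B.T' B.M')"
    unfolding PhiB using Phi_eq[OF B.rp' lenB colB] B.PhiF2 by simp
  have eq: "(PhiT (m-1) A.K2 A.F2 A.T', PhiM (m-1) A.K2 A.F2 A.T' A.M') = (PhiT (m-1) B.K2 B.F2 B.T', PhiM (m-1) B.K2 B.F2 B.T' B.M')"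
  proof (cases "C < K")
    case True
    have k: "A.K2 = K - 1" "B.K2 = C" using True unfolding A.K2_def B.K2_def by auto
    have bf: "(\<lambda>c. if c < K then (if erow T C t c < erow T K s c then erow T C t c else erow T C t c - 1) else erow T C t (c+1)) = B.F2"
      by (rule ext) (simp add: B.F2_def)
    show ?thesis using A.comm[OF True] unfolding k bf B.T'_def[symmetric] B.M'_def[symmetric] A.T'_def[symmetric] A.M'_def[symmetric] by simp
  next
    case False
    then have KC: "K < C" using CK by simp
    have k: "B.K2 = C - 1" "A.K2 = K" using KC unfolding A.K2_def B.K2_def by auto
    have af: "(\<lambda>c. if c < C then (if erow T K s c < erow T C t c then erow T K s c else erow T K s c - 1) else erow T K s (c+1)) = A.F2"
      by (rule ext) (simp add: A.F2_def)
    show ?thesis using B.comm[OF KC] unfolding k af B.T'_def[symmetric] B.M'_def[symmetric] A.T'_def[symmetric] A.M'_def[symmetric] by simp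
  qed
  show ?thesis using r1 PA PB eq by simp
qed


end
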